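(* In the deductive system $NOM$, for all finite sequences of formulas $\Gamma$ and all formulas $\phi,\psi$, the following two rules of inference are derivable: from $\Gamma \vdash \phi \rightarrow \psi$ infer $\Gamma \vdash \neg(\phi \wedge \neg(\phi \wedge \psi))$; and from $\Gamma \vdash \neg(\phi \wedge \neg(\phi \wedge \psi))$ infer $\Gamma \vdash \phi \rightarrow \psi$.
   Context: The propositional deductive system $NOM$: formulas are built from propositional letters using the binary connectives $\wedge$, $\rightarrow$ and the unary connective $\neg$. A sequent is an expression $\phi_1,\ldots,\phi_n \vdash \psi$ with $n\ge 0$, whose antecedent is a finite sequence (order matters, repetitions allowed) of formulas. Below $\Gamma$ denotes a finite, possibly empty, sequence of formulas, $\phi,\psi,\chi$ formulas, and commas denote concatenation. A sequent is derivable in $NOM$ if it can be obtained with the following rules (premises $\Rightarrow$ conclusion): (assumption) $\Gamma,\phi\vdash\phi$, no premises; (cut) $\Gamma\vdash\phi$ and $\Gamma,\phi\vdash\psi$ $\Rightarrow$ $\Gamma\vdash\psi$; (paste) $\Gamma\vdash\phi$ and $\Gamma\vdash\psi$ $\Rightarrow$ $\Gamma,\phi\vdash\psi$; (compatible exchange) $\Gamma,\phi,\psi\vdash\phi$ and $\Gamma,\phi,\psi\vdash\chi$ and $\Gamma,\psi,\phi\vdash\psi$ $\Rightarrow$ $\Gamma,\psi,\phi\vdash\chi$; ($\wedge$-introduction) $\Gamma\vdash\phi$ and $\Gamma\vdash\psi$ $\Rightarrow$ $\Gamma\vdash\phi\wedge\psi$; ($\wedge$-elimination) $\Gamma\vdash\phi\wedge\psi$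 $\Rightarrow$ $\Gamma\vdash\phi$, and $\Gamma\vdash\phi\wedge\psi$ $\Rightarrow$ $\Gamma\vdash\psi$; ($\rightarrow$-introduction) $\Gamma,\phi\vdash\psi$ $\Rightarrow$ $\Gamma\vdash\phi\rightarrow\psi$; ($\rightarrow$-elimination) $\Gamma\vdash\phi\rightarrow\psi$ $\Rightarrow$ $\Gamma,\phi\vdash\psi$; (excluded middle) $\Gamma,\phi\vdash\psi$ and $\Gamma,\neg\phi\vdash\psi$ $\Rightarrow$ $\Gamma\vdash\psi$; (deductive explosion) $\Gamma\vdash\neg\phi$ $\Rightarrow$ $\Gamma,\phi\vdash\psi$. A rule schema is derivable if in every instance its conclusion can be derived from its premises using these rules. *)

theory Defs
  imports Main
begin

datatype 'a form = Letter 'a | Conj "'a form" "'a form" | Imp "'a form" "'a form" | Neg "'a form"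

text \<open>A sequent: antecedent (finite sequence, order and repetitions matter) and succedent.\<close>
type_synonym 'a sequent = "'a form list \<times> 'a form"

text \<open>A rule schema is derivable iff for every instance, the
  conclusion is derivable from the set of its premises.\<close>
inductive derivable :: "'a sequent set \<Rightarrow> 'a sequent \<Rightarrow> bool" for H where
  premise: "s \<in> H \<Longrightarrow> derivable H s"
| assumption: "derivable H (\<Gamma> @ [\<phi>], \<phi>)"
| cut: "derivable H (\<Gamma>, \<phi>) \<Longrightarrow> derivable H (\<Gamma> @ [\<phi>], \<psi>) \<Longrightarrow> derivable H (\<Gamma>, \<psi>)"
| paste: "derivable H (\<Gamma>, \<phi>) \<Longrightarrow> derivable H (\<Gamma>, \<psi>) \<Longrightarrow> derivable H (\<Gamma> @ [\<phi>], \<psi>)"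
| compat_exchange: "derivable H (\<Gamma> @ [\<phi>, \<psi>], \<phi>) \<Longrightarrow> derivable H (\<Gamma> @ [\<phi>, \<psi>], \<chi>)
    \<Longrightarrow> derivable H (\<Gamma> @ [\<psi>, \<phi>], \<psi>) \<Longrightarrow> derivable H (\<Gamma> @ [\<psi>, \<phi>], \<chi>)"
| conjI: "derivable H (\<Gamma>, \<phi>) \<Longrightarrow> derivable H (\<Gamma>, \<psi>) \<Longrightarrow> derivable H (\<Gamma>, Conj \<phi> \<psi>)"
| conjE1: "derivable H (\<Gamma>, Conj \<phi> \<psi>) \<Longrightarrow> derivable H (\<Gamma>, \<phi>)"
| conjE2: "derivable H (\<Gamma>, Conj \<phi> \<psi>) \<Longrightarrow> derivable H (\<Gamma>, \<psi>)"
| impI: "derivable H (\<Gamma> @ [\<phi>], \<psi>) \<Longrightarrow> derivable H (\<Gamma>, Imp \<phi> \<psi>)"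
| impE: "derivable H (\<Gamma>, Imp \<phi> \<psi>) \<Longrightarrow> derivable H (\<Gamma> @ [\<phi>], \<psi>)"
| excluded_middle: "derivable H (\<Gamma> @ [\<phi>], \<psi>) \<Longrightarrow> derivable H (\<Gamma> @ [Neg \<phi>], \<psi>) \<Longrightarrow> derivable H (\<Gamma>, \<psi>)"
| explosion: "derivable H (\<Gamma>, Neg \<phi>) \<Longrightarrow> derivable H (\<Gamma> @ [\<phi>], \<psi>)"

end

theory Submission
  imports Defs
begin

lemma dn_imp: "derivable H (\<Gamma>, Imp X (Neg (Neg X)))"
proof -
  let ?D = "Imp (Neg (Neg X)) X"
  have a1: "derivable H (\<Gamma> @ [Neg (Neg X), X], X)"
    using derivable.assumption[of H "\<Gamma> @ [Neg (Neg X)]" X] by simp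
  have a2: "derivable H (\<Gamma> @ [Neg (Neg X), Neg X], X)"
    using derivable.explosion[OF derivable.assumption[of H "\<Gamma>" "Neg (Neg X)"]] by simp
  have a: "derivable H (\<Gamma> @ [Neg (Neg X)], X)"
    using derivable.excluded_middle[of H "\<Gamma> @ [Neg (Neg X)]" X X] a1 a2 by simp
  have d: "derivable H (\<Gamma>, ?D)" using derivable.impI[OF a] .
  have c1: "derivable H (\<Gamma> @ [?D, Neg X], Imp X (Neg (Neg X)))"
    using derivable.impI[OF derivable.explosion[OF derivable.assumption[of H "\<Gamma> @ [?D]" "Neg X"]]]
    by simp
  have e1: "derivable H (\<Gamma> @ [?D, Neg (Neg X)], X)"
    using derivable.impE[OF derivable.assumption[of H \<Gamma> ?D]] by simp
  have e2: "derivable H (\<Gamma> @ [?D, Neg (Neg X)], Neg (Neg X))"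
    using derivable.assumption[of H "\<Gamma> @ [?D]" "Neg (Neg X)"] by simp
  have c2: "derivable H (\<Gamma> @ [?D, Neg (Neg X)], Imp X (Neg (Neg X)))"
    using derivable.impI[OF derivable.paste[OF e1 e2]] by simp
  have c: "derivable H (\<Gamma> @ [?D], Imp X (Neg (Neg X)))"
    using derivable.excluded_middle[of H "\<Gamma> @ [?D]" "Neg X"] c1 c2 by simp
  show ?thesis using derivable.cut[OF d c] .
qed

lemma dni: "derivable H (\<Gamma>, X) \<Longrightarrow> derivable H (\<Gamma>, Neg (Neg X))"
  using derivable.cut derivable.impE dn_imp by blast

lemma explode: "derivable H (\<Gamma>, X) \<Longrightarrow> derivable H (\<Gamma> @ [Neg X], \<chi>)"
  using derivable.explosion dni by blast

lemma dir1:
  assumes P: "derivable H (\<Gamma>, Imp p q)"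
  shows "derivable H (\<Gamma>, Neg (Conj p (Neg (Conj p q))))"
proof -
  let ?C = "Conj p q"
  let ?A = "Conj p (Neg ?C)"
  have pq: "derivable H (\<Gamma> @ [p], q)" using derivable.impE[OF P] .
  have pC: "derivable H (\<Gamma> @ [p], ?C)"
    using derivable.conjI[OF derivable.assumption pq] .
  have ex1: "derivable H (\<Gamma> @ [p, Neg ?C, ?A], \<chi>)" for \<chi>
    using derivable.paste[OF explode[OF pC] explode[OF pC]] by simp
  have aA: "derivable H (\<Gamma> @ [p, ?A], ?A)"
    using derivable.assumption[of H "\<Gamma> @ [p]" ?A] by simp
  have aNC: "derivable H (\<Gamma> @ [p, ?A], Neg ?C)" using derivable.conjE2[OF aA] .
  have aANC: "derivable H (\<Gamma> @ [p, ?A, Neg ?C], ?A)"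
    using derivable.paste[OF aNC aA] by simp
  have ex2': "derivable H (\<Gamma> @ [p, ?A, Neg ?C], \<chi>)" for \<chi>
    using derivable.compat_exchange[of H "\<Gamma> @ [p]" "Neg ?C" ?A \<chi>] ex1 aANC by simp
  have ex2: "derivable H (\<Gamma> @ [p, ?A], \<chi>)" for \<chi>
    using derivable.cut[of H "\<Gamma> @ [p, ?A]" "Neg ?C" \<chi>] aNC ex2' by simp
  have AA: "derivable H (\<Gamma> @ [?A], ?A)" by (rule derivable.assumption)
  have Ap: "derivable H (\<Gamma> @ [?A], p)" using derivable.conjE1[OF AA] .
  have pAp: "derivable H (\<Gamma> @ [p, ?A], p)" using ex2 .
  have ApA: "derivable H (\<Gamma> @ [?A, p], ?A)" using derivable.paste[OF Ap AA] by simp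
  have ex3': "derivable H (\<Gamma> @ [?A, p], \<chi>)" for \<chi>
    using derivable.compat_exchange[of H \<Gamma> p ?A \<chi>] pAp ex2 ApA by simp
  have ex3: "derivable H (\<Gamma> @ [?A], \<chi>)" for \<chi>
    using derivable.cut[of H "\<Gamma> @ [?A]" p \<chi>] Ap ex3' by simp
  show ?thesis
    using derivable.excluded_middle[OF ex3 derivable.assumption] .
qed

lemma dir2:
  assumes P: "derivable H (\<Gamma>, Neg (Conj p (Neg (Conj p q))))"
  shows "derivable H (\<Gamma>, Imp p q)"
proof -
  let ?C = "Conj p q"
  let ?A = "Conj p (Neg ?C)"
  have CC: "derivable H (\<Gamma> @ [?C], ?C)" by (rule derivable.assumption)
  have b1: "derivable H (\<Gamma> @ [?C], Imp p q)"
    using derivable.impI[OF derivable.paste[OF derivable.conjE1[OF CC] derivable.conjE2[OF CC]]] .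
  have exA: "derivable H (\<Gamma> @ [?A], \<chi>)" for \<chi>
    using derivable.explosion[OF P] .
  have exANC: "derivable H (\<Gamma> @ [?A, Neg ?C], \<chi>)" for \<chi>
    using derivable.explosion[OF exA] by simp
  have NCA: "derivable H (\<Gamma> @ [Neg ?C, ?A], Neg ?C)"
    using derivable.conjE2[OF derivable.assumption[of H "\<Gamma> @ [Neg ?C]" ?A]] by simp
  have exNCA: "derivable H (\<Gamma> @ [Neg ?C, ?A], \<chi>)" for \<chi>
    using derivable.compat_exchange[of H \<Gamma> ?A "Neg ?C" \<chi>] exANC NCA by simp
  have exNCAp: "derivable H (\<Gamma> @ [Neg ?C, ?A, p], \<chi>)" for \<chi>
    using derivable.explosion[OF exNCA] by simp
  have NCpA: "derivable H (\<Gamma> @ [Neg ?C, p, ?A], p)"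
    using derivable.conjE1[OF derivable.assumption[of H "\<Gamma> @ [Neg ?C, p]" ?A]] by simp
  have NCpAq: "derivable H (\<Gamma> @ [Neg ?C, p, ?A], q)"
    using derivable.compat_exchange[of H "\<Gamma> @ [Neg ?C]" ?A p q] exNCAp NCpA by simp
  have exNCC: "derivable H (\<Gamma> @ [Neg ?C, ?C], \<chi>)" for \<chi>
    using derivable.explosion[OF derivable.assumption[of H \<Gamma> "Neg ?C"]] by simp
  have exNCCp: "derivable H (\<Gamma> @ [Neg ?C, ?C, p], \<chi>)" for \<chi>
    using derivable.explosion[OF exNCC] by simp
  have NCpCp: "derivable H (\<Gamma> @ [Neg ?C, p, ?C], p)"
    using derivable.conjE1[OF derivable.assumption[of H "\<Gamma> @ [Neg ?C, p]" ?C]] by simp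
  have br1: "derivable H (\<Gamma> @ [Neg ?C, p, ?C], Neg ?C)"
    using derivable.compat_exchange[of H "\<Gamma> @ [Neg ?C]" ?C p "Neg ?C"] exNCCp NCpCp by simp
  have br2: "derivable H (\<Gamma> @ [Neg ?C, p, Neg ?C], Neg ?C)"
    using derivable.assumption[of H "\<Gamma> @ [Neg ?C, p]" "Neg ?C"] by simp
  have NCpNC: "derivable H (\<Gamma> @ [Neg ?C, p], Neg ?C)"
    using derivable.excluded_middle[of H "\<Gamma> @ [Neg ?C, p]" ?C "Neg ?C"] br1 br2 by simp
  have NCpp: "derivable H (\<Gamma> @ [Neg ?C, p], p)"
    using derivable.assumption[of H "\<Gamma> @ [Neg ?C]" p] by simp
  have NCpA': "derivable H (\<Gamma> @ [Neg ?C, p], ?A)" using derivable.conjI[OF NCpp NCpNC] .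
  have NCpq: "derivable H (\<Gamma> @ [Neg ?C, p], q)"
    using derivable.cut[of H "\<Gamma> @ [Neg ?C, p]" ?A q] NCpA' NCpAq by simp
  have b2: "derivable H (\<Gamma> @ [Neg ?C], Imp p q)"
    using derivable.impI[of H "\<Gamma> @ [Neg ?C]" p q] NCpq by simp
  show ?thesis using derivable.excluded_middle[OF b1 b2] .
qed

theorem theorem2p10:
  fixes \<Gamma> :: "'a form list" and \<phi> \<psi> :: "'a form"
  shows "derivable {(\<Gamma>, Imp \<phi> \<psi>)} (\<Gamma>, Neg (Conj \<phi> (Neg (Conj \<phi> \<psi>))))
       \<and> derivable {(\<Gamma>, Neg (Conj \<phi> (Neg (Conj \<phi> \<psi>))))} (\<Gamma>, Imp \<phi> \<psi>)"
  using dir1[OF derivable.premise] dir2[OF derivable.premise] by blast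

end
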